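(* Let $0<b<B$. For every instance $\langle A,f,c\rangle$ (with $f$ monotone) such that $p(\{i\})\le b$ for all $i\in A$, $$\frac{\textsc{Max-Profit}(B)}{\textsc{Max-Profit}(b)}\le\frac{\textsc{Max-Reward}(B)}{\textsc{Max-Reward}(b)}.$$
   Context: An instance $\langle A,f,c\rangle$ consists of a finite set $A$ of agents, a monotone nondecreasing $f:2^A\to[0,1]$, and costs $c_i\ge0$. For $S\subseteq A$, $i\in S$: $f_S(i)=f(S)-f(S\setminus\{i\})$; $p(S)=\sum_{i\in S}c_i/f_S(i)$ (conventions: $0$ if $c_i=0=f_S(i)$, $\infty$ if $c_i>0=f_S(i)$); the profit is $g(S)=(1-p(S))f(S)$. $\textsc{Max-Profit}(B)=\max\{g(S):p(S)\le B\}$ and $\textsc{Max-Reward}(B)=\max\{f(S):p(S)\le B\}$. *)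

theory Defs
  imports Complex_Main "HOL-Library.Extended_Real"
begin

definition marg :: "('a set \<Rightarrow> real) \<Rightarrow> 'a set \<Rightarrow> 'a \<Rightarrow> real" where
  "marg f S i = f S - f (S - {i})"

definition pterm :: "('a set \<Rightarrow> real) \<Rightarrow> ('a \<Rightarrow> real) \<Rightarrow> 'a set \<Rightarrow> 'a \<Rightarrow> ereal" where
  "pterm f c S i =
     (if marg f S i = 0 then (if c i = 0 then 0 else \<infinity>) else ereal (c i / marg f S i))"

definition price :: "('a set \<Rightarrow> real) \<Rightarrow> ('a \<Rightarrow> real) \<Rightarrow> 'a set \<Rightarrow> ereal" where
  "price f c S = (\<Sum>i\<in>S. pterm f c S i)"

text \<open>Profit g(S) = (1 - p(S)) f(S); only used for S with finite price.\<close>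
definition profit :: "('a set \<Rightarrow> real) \<Rightarrow> ('a \<Rightarrow> real) \<Rightarrow> 'a set \<Rightarrow> real" where
  "profit f c S = (1 - real_of_ereal (price f c S)) * f S"

definition max_profit :: "'a set \<Rightarrow> ('a set \<Rightarrow> real) \<Rightarrow> ('a \<Rightarrow> real) \<Rightarrow> real \<Rightarrow> real" where
  "max_profit A f c B = Max {profit f c S | S. S \<subseteq> A \<and> price f c S \<le> ereal B}"

definition max_reward :: "'a set \<Rightarrow> ('a set \<Rightarrow> real) \<Rightarrow> ('a \<Rightarrow> real) \<Rightarrow> real \<Rightarrow> real" where
  "max_reward A f c B = Max {f S | S. S \<subseteq> A \<and> price f c S \<le> ereal B}"

end

theory Submission
  imports Defs
begin

theorem mainTheorem17:
  fixes A :: "'a set" and f :: "'a set \<Rightarrow> real" and c :: "'a \<Rightarrow> real" and b B :: real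
  assumes "0 < b" and "b < B"
    and "finite A"
    and "\<And>S. S \<subseteq> A \<Longrightarrow> 0 \<le> f S \<and> f S \<le> 1"
    and "\<And>S T. S \<subseteq> T \<Longrightarrow> T \<subseteq> A \<Longrightarrow> f S \<le> f T"
    and "\<And>i. i \<in> A \<Longrightarrow> 0 \<le> c i"
    and "\<And>i. i \<in> A \<Longrightarrow> price f c {i} \<le> ereal b"
  shows "max_profit A f c B / max_profit A f c b \<le> max_reward A f c B / max_reward A f c b"
proof -
  note fb = assms(4) and mono = assms(5) and cpos = assms(6)
  have pnn: "0 \<le> price f c S" if "S \<subseteq> A" for S
    unfolding price_def
  proof (rule sum_nonneg)
    fix i assume i: "i \<in> S"
    have "f (S - {i}) \<le> f S" using mono[of "S - {i}" S] that by auto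
    hence m: "0 \<le> marg f S i" by (simp add: marg_def)
    have "0 \<le> c i" using cpos i that by auto
    thus "0 \<le> pterm f c S i" using m by (auto simp: pterm_def)
  qed
  have feas: "\<exists>p. price f c S = ereal p \<and> 0 \<le> p \<and> p \<le> x \<and> profit f c S = (1 - p) * f S"
    if SA: "S \<subseteq> A" and Sp: "price f c S \<le> ereal x" for S x
  proof -
    have "0 \<le> price f c S" using pnn SA by auto
    then obtain p where p: "price f c S = ereal p" using Sp
      by (cases "price f c S") auto
    show ?thesis using p SA Sp \<open>0 \<le> price f c S\<close> by (auto simp: profit_def)
  qed
  define PS where "PS x = {profit f c S | S. S \<subseteq> A \<and> price f c S \<le> ereal x}" for x
  define RS where "RS x = {f S | S. S \<subseteq> A \<and> price f c S \<le> ereal x}" for x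
  have finP: "finite (PS x)" for x
  proof -
    have "PS x \<subseteq> (profit f c) ` Pow A" unfolding PS_def by auto
    thus ?thesis using assms(3) finite_subset by blast
  qed
  have finR: "finite (RS x)" for x
  proof -
    have "RS x \<subseteq> f ` Pow A" unfolding RS_def by auto
    thus ?thesis using assms(3) finite_subset by blast
  qed
  have emp: "price f c {} \<le> ereal x" if "0 \<le> x" for x using that by (simp add: price_def)
  have neP: "profit f c {} \<in> PS x" if "0 \<le> x" for x
    unfolding PS_def using emp[OF that] by blast
  have neR: "f {} \<in> RS x" if "0 \<le> x" for x
    unfolding RS_def using emp[OF that] by blast
  have MP: "max_profit A f c x = Max (PS x)" for x unfolding max_profit_def PS_def by simp
  have MR: "max_reward A f c x = Max (RS x)" for x unfolding max_reward_def RS_def by simp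
  have xb: "0 \<le> b" "0 \<le> B" using assms(1,2) by auto
  have MPnn: "0 \<le> max_profit A f c x" if "0 \<le> x" for x
  proof -
    have "profit f c {} = f {}" by (simp add: profit_def price_def)
    moreover have "0 \<le> f {}" using fb by auto
    moreover have "profit f c {} \<le> Max (PS x)" using neP[OF that] finP by auto
    ultimately show ?thesis using MP by simp
  qed
  have MPle: "max_profit A f c x \<le> max_reward A f c x" if "0 \<le> x" for x
  proof -
    have "Max (PS x) \<in> PS x" using finP neP[OF that] by (intro Max_in) auto
    then obtain S where S: "S \<subseteq> A" "price f c S \<le> ereal x" "Max (PS x) = profit f c S"
      unfolding PS_def by auto
    obtain p where p: "0 \<le> p" "profit f c S = (1 - p) * f S" using feas[OF S(1,2)] by auto
    have "(1 - p) * f S \<le> f S" using p fb[OF S(1)] by (simp add: algebra_simps)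
    moreover have "f S \<le> Max (RS x)" using finR S unfolding RS_def by (intro Max_ge) auto
    ultimately show ?thesis using MP MR S p by simp
  qed
  have MRnn: "0 \<le> max_reward A f c x" if "0 \<le> x" for x
    using MPle MPnn that by (meson order_trans)
  have MRmono: "max_reward A f c b \<le> max_reward A f c B"
  proof -
    have "Max (RS b) \<in> RS b" using finR neR[OF xb(1)] by (intro Max_in) auto
    moreover have "RS b \<subseteq> RS B" unfolding RS_def
    proof (intro subsetI)
      fix y assume "y \<in> {f S |S. S \<subseteq> A \<and> price f c S \<le> ereal b}"
      then obtain S where "y = f S" "S \<subseteq> A" "price f c S \<le> ereal b" by auto
      moreover have "ereal b \<le> ereal B" using assms(2) by simp
      ultimately show "y \<in> {f S |S. S \<subseteq> A \<and> price f c S \<le> ereal B}"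
        using order_trans by blast
    qed
    ultimately show ?thesis using MR finR by (simp add: Max_ge subsetD)
  qed
  have key: "max_profit A f c B \<le> max_profit A f c b \<or>
      (b < 1 \<and> max_profit A f c B \<le> (1 - b) * max_reward A f c B)"
  proof -
    have "Max (PS B) \<in> PS B" using finP neP[OF xb(2)] by (intro Max_in) auto
    then obtain S where S: "S \<subseteq> A" "price f c S \<le> ereal B" "Max (PS B) = profit f c S"
      unfolding PS_def by auto
    obtain p where p: "price f c S = ereal p" "0 \<le> p" "profit f c S = (1 - p) * f S"
      using feas[OF S(1,2)] by auto
    show ?thesis
    proof (cases "p \<le> b")
      case True
      hence "price f c S \<le> ereal b" using p by simp
      hence "profit f c S \<in> PS b" unfolding PS_def using S(1) by blast
      hence "profit f c S \<le> Max (PS b)" using finP by auto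
      thus ?thesis using MP S by simp
    next
      case False
      have fS: "0 \<le> f S" using fb S by auto
      have "(1 - p) * f S \<le> (1 - b) * f S" using False fS by (simp add: mult_right_mono)
      show ?thesis
      proof (cases "b < 1")
        case True
        have "f S \<le> Max (RS B)" using finR S unfolding RS_def by (intro Max_ge) auto
        hence h1: "(1 - b) * f S \<le> (1 - b) * Max (RS B)" using True by (intro mult_left_mono) auto
        have "max_profit A f c B \<le> (1 - b) * max_reward A f c B"
          unfolding MP MR using h1 \<open>(1 - p) * f S \<le> (1 - b) * f S\<close> S p by linarith
        thus ?thesis using True by blast
      next
        case False
        have "(1 - b) * f S \<le> 0" using False fS by (simp add: mult_nonpos_nonneg)
        thus ?thesis using MPnn[OF xb(1)] \<open>(1 - p) * f S \<le> (1 - b) * f S\<close> MP S p by simp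
      qed
    qed
  qed
  have low: "(1 - b) * max_reward A f c b \<le> max_profit A f c b"
  proof -
    have "Max (RS b) \<in> RS b" using finR neR[OF xb(1)] by (intro Max_in) auto
    then obtain S where S: "S \<subseteq> A" "price f c S \<le> ereal b" "Max (RS b) = f S"
      unfolding RS_def by auto
    obtain p where p: "p \<le> b" "profit f c S = (1 - p) * f S" using feas[OF S(1,2)] by auto
    have "(1 - b) * f S \<le> (1 - p) * f S" using p fb[OF S(1)] by (simp add: mult_right_mono)
    moreover have "profit f c S \<le> Max (PS b)" using finP S unfolding PS_def by (intro Max_ge) auto
    ultimately show ?thesis using MP MR S p by simp
  qed
  define pB where "pB = max_profit A f c B"
  define pb where "pb = max_profit A f c b"
  define rB where "rB = max_reward A f c B"
  define rb where "rb = max_reward A f c b"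
  have h: "0 \<le> pB" "0 \<le> pb" "0 \<le> rb" "rb \<le> rB" "pb \<le> rb" "(1 - b) * rb \<le> pb"
    "pB \<le> pb \<or> (b < 1 \<and> pB \<le> (1 - b) * rB)"
    using MPnn[OF xb(1)] MPnn[OF xb(2)] MRnn[OF xb(1)] MRmono MPle[OF xb(1)] low key
    unfolding pB_def pb_def rB_def rb_def by auto
  have "pB / pb \<le> rB / rb"
  proof (cases "pb = 0")
    case True thus ?thesis using h by simp
  next
    case False
    hence pbp: "0 < pb" "0 < rb" using h by auto
    show ?thesis
    proof (cases "pB \<le> pb")
      case True
      have "pB / pb \<le> 1" using True pbp by simp
      moreover have "1 \<le> rB / rb" using h pbp by simp
      ultimately show ?thesis by linarith
    next
      case False
      hence b1: "b < 1" and le: "pB \<le> (1 - b) * rB" using h by auto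
      have "pB / pb \<le> (1 - b) * rB / pb" using le pbp by (simp add: divide_right_mono)
      also have "\<dots> \<le> (1 - b) * rB / ((1 - b) * rb)"
        using b1 pbp h by (intro divide_left_mono) (auto intro: mult_nonneg_nonneg)
      also have "\<dots> = rB / rb" using b1 by simp
      finally show ?thesis .
    qed
  qed
  thus ?thesis unfolding pB_def pb_def rB_def rb_def .
qed

end
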